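(* For every integer $n\ge 1$, $$B_{2^{n+1}-i}(t)-B_{2^{n}+i}(t)=\begin{cases} t(t-1)\,B_{2^{n-1}-i}(t) & \text{for } i=0,1,\dots,2^{n-1},\\ -t(t-1)\,B_{i-2^{n-1}}(t) & \text{for } i=2^{n-1}+1,\dots,2^{n}.\end{cases}$$
   Context: The Stern polynomials $B_n(t)\in\mathbb{Z}[t]$, $n\ge 0$, are defined by $B_0(t)=0$, $B_1(t)=1$, $B_{2n}(t)=tB_n(t)$ and $B_{2n+1}(t)=B_n(t)+B_{n+1}(t)$ for $n\ge 1$. *)

theory Defs
  imports "HOL-Computational_Algebra.Polynomial"
begin

function stern :: "nat \<Rightarrow> int poly" where
  "stern n = (if n = 0 then 0 else if n = 1 then 1
     else if even n then [:0, 1:] * stern (n div 2)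
     else stern (n div 2) + stern (n div 2 + 1))"
  by auto
termination
  by (relation "measure id") (auto elim: oddE)

declare stern.simps [simp del]

lemma stern_0: "stern 0 = 0" by (simp add: stern.simps)
lemma stern_1: "stern 1 = 1" by (simp add: stern.simps)
lemma stern_even: "n \<ge> 1 \<Longrightarrow> stern (2 * n) = [:0, 1:] * stern n"
  by (subst stern.simps) auto
lemma stern_odd: "n \<ge> 1 \<Longrightarrow> stern (2 * n + 1) = stern n + stern (n + 1)"
  by (subst stern.simps) auto

end

theory Submission
  imports Defs
begin

lemma stern_even': "stern (2 * n) = [:0, 1:] * stern n"
  by (cases "n = 0") (simp_all add: stern_0 stern_even)

lemma stern_odd': "stern (2 * n + 1) = stern n + stern (n + 1)"
  using stern_odd[of n] by (cases "n = 0") (simp_all add: stern_0 stern_1)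

definition S :: "int \<Rightarrow> int poly" where
  "S k = (if k \<ge> 0 then stern (nat k) else - stern (nat (-k)))"

lemma S_even: "S (2 * k) = [:0, 1:] * S k"
proof (cases "k \<ge> 0")
  case True
  then have "nat (2*k) = 2 * nat k" by simp
  then show ?thesis using True by (simp add: S_def stern_even')
next
  case False
  then have "nat (-(2*k)) = 2 * nat (-k)" by simp
  then show ?thesis using False by (simp add: S_def stern_even')
qed

lemma S_odd: "S (2 * k + 1) = S k + S (k + 1)"
proof (cases "k \<ge> 0")
  case True
  then have "nat (2*k+1) = 2 * nat k + 1" "nat (k+1) = nat k + 1" by simp_all
  then show ?thesis using True stern_odd'[of "nat k"] by (simp add: S_def)
next
  case False
  define m where "m = nat (-k - 1)"
  have k: "k = - int m - 1" using False m_def by simp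
  have a: "S (2*k+1) = - stern (2*m+1)"
  proof -
    have "nat (-(2*k+1)) = 2*m+1" using k by simp
    thus ?thesis using k by (simp add: S_def)
  qed
  have b: "S k = - stern (m+1)" using k by (simp add: S_def nat_add_distrib)
  have c: "S (k+1) = - stern m" using k by (cases "m = 0") (simp_all add: S_def stern_0)
  show ?thesis unfolding a b c stern_odd' by simp
qed

lemma main:
  "i \<le> 2 ^ (m + 1) \<Longrightarrow>
   stern (2 ^ (m + 2) - i) - stern (2 ^ (m + 1) + i)
     = [:0, 1:] * [:-1, 1:] * S (2 ^ m - int i)"
proof (induction m arbitrary: i)
  case 0
  then have "i = 0 \<or> i = 1 \<or> i = 2" by auto
  moreover have "stern 2 = [:0,1:]" using stern_even'[of 1] stern_1 by (simp del: One_nat_def)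
  moreover have "stern 4 = [:0,1:] * [:0,1:]" using stern_even'[of 2] \<open>stern 2 = _\<close> by simp
  moreover have "stern 3 = [:0,1:] + 1" using stern_odd'[of 1] \<open>stern 2 = _\<close> stern_1 by (simp del: One_nat_def)
  ultimately show ?case
    by (elim disjE) (simp_all del: One_nat_def add: S_def stern_0 stern_1 algebra_simps stern_1[unfolded One_nat_def] numeral_2_eq_2[symmetric])
next
  case (Suc m)
  show ?case
  proof (cases "even i")
    case True
    then obtain j where i: "i = 2 * j" by auto
    have j: "j \<le> 2 ^ (m + 1)" using Suc.prems i by simp
    have e1: "2 ^ (Suc m + 2) - i = 2 * (2 ^ (m + 2) - j)" using i j by simp
    have e2: "2 ^ (Suc m + 1) + i = 2 * (2 ^ (m + 1) + j)" using i by simp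
    have e3: "(2::int) ^ Suc m - int i = 2 * (2 ^ m - int j)" using i by simp
    have "stern (2 ^ (Suc m + 2) - i) - stern (2 ^ (Suc m + 1) + i)
        = [:0, 1:] * (stern (2 ^ (m + 2) - j) - stern (2 ^ (m + 1) + j))"
      unfolding e1 e2 stern_even' by (simp add: algebra_simps)
    also have "\<dots> = [:0, 1:] * ([:0, 1:] * [:-1, 1:] * S (2 ^ m - int j))"
      using Suc.IH[OF j] by simp
    also have "\<dots> = [:0, 1:] * [:-1, 1:] * S (2 ^ Suc m - int i)"
      unfolding e3 S_even by (simp add: algebra_simps)
    finally show ?thesis .
  next
    case False
    then obtain j where i: "i = 2 * j + 1" using oddE by blast
    have j: "j + 1 \<le> 2 ^ (m + 1)" using Suc.prems i by simp
    have j': "j \<le> 2 ^ (m + 1)" using j by simp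
    have e1: "2 ^ (Suc m + 2) - i = 2 * (2 ^ (m + 2) - (j + 1)) + 1" using i j by simp
    have e1': "2 ^ (m + 2) - (j + 1) + 1 = 2 ^ (m + 2) - j" using j by simp
    have e2: "2 ^ (Suc m + 1) + i = 2 * (2 ^ (m + 1) + j) + 1" using i by simp
    have e3: "(2::int) ^ Suc m - int i = 2 * (2 ^ m - int (j + 1)) + 1" using i by simp
    have e4: "(2::int) ^ m - int (j + 1) + 1 = 2 ^ m - int j" by simp
    show ?thesis
      unfolding e1 e2 e3 stern_odd' S_odd e1' e4
      using Suc.IH[OF j] Suc.IH[OF j']
      by (simp add: algebra_simps)
  qed
qed

theorem theorem2p3:
  fixes n i :: nat
  assumes "n \<ge> 1"
  shows "(i \<le> 2 ^ (n - 1) \<longrightarrow>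
           stern (2 ^ (n + 1) - i) - stern (2 ^ n + i)
             = [:0, 1:] * [:-1, 1:] * stern (2 ^ (n - 1) - i))
       \<and> (2 ^ (n - 1) < i \<and> i \<le> 2 ^ n \<longrightarrow>
           stern (2 ^ (n + 1) - i) - stern (2 ^ n + i)
             = - ([:0, 1:] * [:-1, 1:] * stern (i - 2 ^ (n - 1))))"
proof -
  obtain m where n: "n = m + 1" using assms by (metis le_add_diff_inverse2)
  have p: "(2::nat) ^ m \<le> 2 ^ (m+1)" by simp
  show ?thesis
  proof (intro conjI impI)
    assume a: "i \<le> 2 ^ (n - 1)"
    then have "i \<le> 2 ^ (m+1)" using n p by simp
    from main[OF this] a n show "stern (2 ^ (n + 1) - i) - stern (2 ^ n + i)
             = [:0, 1:] * [:-1, 1:] * stern (2 ^ (n - 1) - i)"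
      by (simp add: S_def of_nat_diff nat_diff_distrib nat_power_eq)
  next
    assume a: "2 ^ (n - 1) < i \<and> i \<le> 2 ^ n"
    then have "i \<le> 2 ^ (m+1)" using n by simp
    from main[OF this] a n show "stern (2 ^ (n + 1) - i) - stern (2 ^ n + i)
             = - ([:0, 1:] * [:-1, 1:] * stern (i - 2 ^ (n - 1)))"
      by (simp add: S_def nat_diff_distrib nat_power_eq)
  qed
qed

end
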